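(* For every instance of a combinatorial optimization problem (constrained or unconstrained), with $m$ the number of distinct cost values over the feasible solutions, the dynamical Lie algebra of QWOA satisfies $$\dim(\mathfrak g_{\mathrm{QWOA}})\le m^2+1 .$$
   Context: An instance of a combinatorial optimization problem consists of a finite nonempty set $\mathcal S'$ of feasible solutions and a cost function $C:\mathcal S'\to\mathbb R$ (for an unconstrained problem, $\mathcal S'$ is the whole solution space). Let $N=|\mathcal S'|$ and let $m=|C(\mathcal S')|$ be the number of distinct cost values over the feasible solutions. Work in $\mathbb C^N$ with orthonormal basis $\{|z\rangle : z\in\mathcal S'\}$ (for constrained problems this is the indexed feasible subspace, obtained from the full space by a fixed change of basis). The problem Hamiltonian is the diagonal matrix $H_C$ with $H_C|z\rangle=C(z)|z\rangle$. The mixing Hamiltonian is the $N\times N$ all-ones matrix $H_M=J$; it differs from the adjacency matrix of the complete graph $K_N$ by the identity matrix, so it generates the same QWOA mixing unitaries $e^{-itH_M}$ up to a global phase. The dynamical Lie algebra (DLA) of QWOA, $\mathfrak g_{\mathrm{QWOA}}$, is the real Lie algebra generated by $iH_C$ and $iH_M$, i.e. the smallest real linear subspace of the $N\times N$ complex matrices that contains $iH_C$ and $iH_M$ and is closed under the commutator $[A,B]=AB-BA$; its dimension is its dimension as a real vector space. *)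

theory Defs
  imports "HOL-Analysis.Analysis"
begin

text \<open>Solutions are indexed by a finite (nonempty) type 'a, standing for the feasible set S'.
 N x N complex matrices are complex^'a^'a, regarded as a real vector space.\<close>

definition cost_ham :: "('a::finite \<Rightarrow> real) \<Rightarrow> complex^'a^'a" where
  "cost_ham C = (\<chi> i j. if i = j then complex_of_real (C i) else 0)"

definition mixer_ham :: "complex^'a::finite^'a" where
  "mixer_ham = (\<chi> i j. 1)"

definition cmat_scale :: "complex \<Rightarrow> complex^'a::finite^'a \<Rightarrow> complex^'a^'a" where
  "cmat_scale c A = (\<chi> i j. c * A $ i $ j)"

definition commutator :: "complex^'a::finite^'a \<Rightarrow> complex^'a^'a \<Rightarrow> complex^'a^'a" where
  "commutator A B = A ** B - B ** A"

definition lie_closed :: "(complex^'a::finite^'a) set \<Rightarrow> bool" where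
  "lie_closed L \<longleftrightarrow> (\<forall>A\<in>L. \<forall>B\<in>L. commutator A B \<in> L)"

definition gen_real_lie_alg :: "(complex^'a::finite^'a) set \<Rightarrow> (complex^'a^'a) set" where
  "gen_real_lie_alg G = \<Inter>{L. G \<subseteq> L \<and> subspace L \<and> lie_closed L}"

definition qwoa_dla :: "('a::finite \<Rightarrow> real) \<Rightarrow> (complex^'a^'a) set" where
  "qwoa_dla C = gen_real_lie_alg {cmat_scale \<i> (cost_ham C), cmat_scale \<i> mixer_ham}"

end

theory Submission
  imports Defs
begin

definition antiherm :: "complex^'a::finite^'a \<Rightarrow> bool" where
  "antiherm A \<longleftrightarrow> (\<forall>i j. A$j$i = - cnj (A$i$j))"

definition Lset :: "('a::finite \<Rightarrow> real) \<Rightarrow> (complex^'a^'a) set" where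
  "Lset C = {A. antiherm A \<and> (\<exists>f (a::real). \<forall>i j. A$i$j = f (C i) (C j)
      + (if i = j then \<i> * of_real a * of_real (C i) else 0))}"

lemma antiherm_iff: "antiherm A \<longleftrightarrow> (\<forall>i j. cnj (A$i$j) = - A$j$i)"
  unfolding antiherm_def
  by (metis complex_cnj_cnj complex_cnj_minus minus_minus)

lemma csc: "r *\<^sub>R (z::complex) = of_real r * z"
  by (rule scaleR_conv_of_real)

lemma sc_entry: "(r *\<^sub>R (M::complex^'a::finite^'a))$i$j = of_real r * M$i$j"
  unfolding vector_scaleR_component by (rule scaleR_conv_of_real)

lemma antiherm_comm:
  assumes "antiherm A" "antiherm B" shows "antiherm (commutator A B)"
proof -
  have key: "cnj ((X ** Y)$i$j) = (Y ** X)$j$i" if "antiherm X" "antiherm Y" for X Y :: "complex^'a^'a" and i j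
  proof -
    have "cnj ((X ** Y)$i$j) = (\<Sum>k\<in>UNIV. cnj (X$i$k) * cnj (Y$k$j))"
      unfolding matrix_matrix_mult_def by simp
    also have "\<dots> = (\<Sum>k\<in>UNIV. Y$j$k * X$k$i)"
      using that unfolding antiherm_iff by (intro sum.cong refl) (simp add: mult.commute)
    also have "\<dots> = (Y ** X)$j$i"
      unfolding matrix_matrix_mult_def by simp
    finally show ?thesis .
  qed
  show ?thesis unfolding antiherm_iff commutator_def using key[OF assms] key[OF assms(2,1)] by simp
qed

lemma comm_form:
  assumes "\<forall>i j. A$i$j = f (C i) (C j) + (if i = j then \<i> * of_real a * of_real (C i) else 0)"
      and "\<forall>i j. B$i$j = g (C i) (C j) + (if i = j then \<i> * of_real b * of_real (C i) else 0)"
  shows "\<exists>h. \<forall>i j. (commutator A B)$i$j = h (C i) (C j)"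
proof -
  define h1 where "h1 f a g b x y = (\<Sum>k\<in>UNIV. f x (C k) * g (C k) y) + f x y * (\<i> * of_real b * of_real y)
     + (\<i> * of_real a * of_real x) * g x y" for f a g b x y
  have m: "(A ** B)$i$j = h1 f a g b (C i) (C j) + (if i = j then (\<i> * of_real a * of_real (C i)) * (\<i> * of_real b * of_real (C i)) else 0)"
    if "\<forall>i j. A$i$j = f (C i) (C j) + (if i = j then \<i> * of_real a * of_real (C i) else 0)"
      "\<forall>i j. B$i$j = g (C i) (C j) + (if i = j then \<i> * of_real b * of_real (C i) else 0)"
    for A B :: "complex^'a^'a" and f a g b i j
  proof -
    have "(A ** B)$i$j = (\<Sum>k\<in>UNIV. f (C i) (C k) * g (C k) (C j)
       + (if k = j then f (C i) (C j) * (\<i> * of_real b * of_real (C j)) else 0)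
       + (if i = k then (\<i> * of_real a * of_real (C i)) * g (C i) (C j) else 0)
       + (if i = k then (if i = j then (\<i> * of_real a * of_real (C i)) * (\<i> * of_real b * of_real (C i)) else 0) else 0))"
      unfolding matrix_matrix_mult_def vec_lambda_beta
      by (intro sum.cong refl) (simp add: that distrib_left distrib_right)
    also have "\<dots> = h1 f a g b (C i) (C j) + (if i = j then (\<i> * of_real a * of_real (C i)) * (\<i> * of_real b * of_real (C i)) else 0)"
      unfolding h1_def by (simp add: sum.distrib)
    finally show ?thesis .
  qed
  show ?thesis
    apply (rule exI[of _ "\<lambda>x y. h1 f a g b x y - h1 g b f a x y"])
    using m[OF assms] m[OF assms(2,1)] unfolding commutator_def by simp
qed


definition Em :: "('a::finite \<Rightarrow> real) \<Rightarrow> real \<Rightarrow> real \<Rightarrow> complex^'a^'a" where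
  "Em C x y = (\<chi> i j. if C i = x \<and> C j = y then 1 else 0)"

definition gg :: "('a::finite \<Rightarrow> real) \<Rightarrow> real \<times> real \<Rightarrow> complex^'a^'a" where
  "gg C p = (if fst p < snd p then Em C (fst p) (snd p) - Em C (snd p) (fst p)
             else cmat_scale \<i> (Em C (fst p) (snd p) + Em C (snd p) (fst p)))"

lemma T1_span:
  assumes "x \<in> range C" "y \<in> range C"
  shows "Em C x y - Em C y x \<in> span (gg C ` (range C \<times> range C))"
proof -
  consider "x < y" | "y < x" | "x = y" by fastforce
  then show ?thesis
  proof cases
    case 1
    then have "Em C x y - Em C y x = gg C (x, y)" by (simp add: gg_def)
    then show ?thesis using assms by (metis mem_Sigma_iff image_eqI span_base)
  next
    case 2
    then have "Em C x y - Em C y x = - gg C (y, x)" by (simp add: gg_def)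
    then show ?thesis using assms by (metis mem_Sigma_iff image_eqI span_base span_neg)
  next
    case 3
    then show ?thesis by (simp add: span_zero)
  qed
qed

lemma T2_span:
  assumes "x \<in> range C" "y \<in> range C"
  shows "cmat_scale \<i> (Em C x y + Em C y x) \<in> span (gg C ` (range C \<times> range C))"
proof -
  consider "x < y" | "\<not> x < y" by fastforce
  then show ?thesis
  proof cases
    case 1
    then have "cmat_scale \<i> (Em C x y + Em C y x) = gg C (y, x)" by (simp add: gg_def add.commute)
    then show ?thesis using assms by (metis mem_Sigma_iff image_eqI span_base)
  next
    case 2
    then have "cmat_scale \<i> (Em C x y + Em C y x) = gg C (x, y)" by (simp add: gg_def)
    then show ?thesis using assms by (metis mem_Sigma_iff image_eqI span_base)
  qed
qed

lemma Em_ij: "Em C x y $ i $ j = (if (x, y) = (C i, C j) then 1 else 0)"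
  unfolding Em_def by auto

lemma aux_if:
  fixes r s :: real
  shows "of_real r * ((if P then 1 else 0) - (if Q then 1 else 0)) + of_real s * (\<i> * ((if P then 1 else 0) + (if Q then 1 else 0)))
     = (if P then of_real r + \<i> * of_real s else 0) + (if Q then - of_real r + \<i> * of_real s else (0::complex))"
  by (cases P; cases Q) (simp_all add: algebra_simps)

lemma entry_aux:
  fixes r s :: real
  shows "(r *\<^sub>R (Em C x y - Em C y x) + s *\<^sub>R cmat_scale \<i> (Em C x y + Em C y x))$i$j
     = (if (x, y) = (C i, C j) then of_real r + \<i> * of_real s else 0)
     + (if (x, y) = (C j, C i) then - of_real r + \<i> * of_real s else 0)"
proof -
  have e: "((y, x) = (C i, C j)) = ((x, y) = (C j, C i))" by auto
  have "(r *\<^sub>R (Em C x y - Em C y x) + s *\<^sub>R cmat_scale \<i> (Em C x y + Em C y x))$i$j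
     = of_real r * (Em C x y $ i $ j - Em C y x $ i $ j) + of_real s * (\<i> * (Em C x y $ i $ j + Em C y x $ i $ j))"
    by (simp only: vector_add_component vector_minus_component
        sc_entry cmat_scale_def vec_lambda_beta)
  also have "\<dots> = of_real r * ((if (x, y) = (C i, C j) then 1 else 0) - (if (x, y) = (C j, C i) then 1 else 0))
     + of_real s * (\<i> * ((if (x, y) = (C i, C j) then 1 else 0) + (if (x, y) = (C j, C i) then 1 else 0)))"
    by (simp only: Em_ij e)
  also have "\<dots> = (if (x, y) = (C i, C j) then of_real r + \<i> * of_real s else 0)
     + (if (x, y) = (C j, C i) then - of_real r + \<i> * of_real s else 0)"
    by (rule aux_if)
  finally show ?thesis .
qed

lemma F_span:
  fixes F :: "complex^'a::finite^'a"
  assumes ah: "antiherm F" and Ff: "\<forall>i j. F$i$j = f (C i) (C j)"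
  shows "F \<in> span (gg C ` (range C \<times> range C))"
proof -
  define Rg where "Rg = range C"
  define G where "G = (\<Sum>p\<in>Rg \<times> Rg. (Re (f (fst p) (snd p)) / 2) *\<^sub>R (Em C (fst p) (snd p) - Em C (snd p) (fst p))
      + (Im (f (fst p) (snd p)) / 2) *\<^sub>R cmat_scale \<i> (Em C (fst p) (snd p) + Em C (snd p) (fst p)))"
  have fin: "finite (Rg \<times> Rg)" unfolding Rg_def by simp
  have "G \<in> span (gg C ` (range C \<times> range C))"
    unfolding G_def
    apply (rule span_sum)
    apply (rule span_add)
    apply (rule span_scale)
     apply (rule T1_span; auto simp: Rg_def)
    apply (rule span_scale)
    apply (rule T2_span; auto simp: Rg_def)
    done
  moreover have "F = G"
  proof (intro vec_eq_iff[THEN iffD2] allI)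
    fix i j
    have CR: "C i \<in> Rg" "C j \<in> Rg" unfolding Rg_def by auto
    have "G$i$j = (\<Sum>p\<in>Rg \<times> Rg. (if p = (C i, C j) then of_real (Re (f (fst p) (snd p)) / 2) + \<i> * of_real (Im (f (fst p) (snd p)) / 2) else 0)
        + (if p = (C j, C i) then - of_real (Re (f (fst p) (snd p)) / 2) + \<i> * of_real (Im (f (fst p) (snd p)) / 2) else 0))"
      unfolding G_def sum_component
      by (intro sum.cong refl) (simp only: entry_aux prod.collapse)
    also have "\<dots> = (of_real (Re (f (C i) (C j)) / 2) + \<i> * of_real (Im (f (C i) (C j)) / 2))
       + (- of_real (Re (f (C j) (C i)) / 2) + \<i> * of_real (Im (f (C j) (C i)) / 2))"
      using fin CR by (simp add: sum.distrib)
    also have "\<dots> = f (C i) (C j) / 2 - cnj (f (C j) (C i)) / 2"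
      by (simp add: complex_eq_iff)
    also have "\<dots> = F$i$j"
    proof -
      have a1: "f (C i) (C j) = F$i$j" using Ff by simp
      have "cnj (F$j$i) = - F$i$j" using ah unfolding antiherm_iff by blast
      then have a2: "cnj (f (C j) (C i)) = - F$i$j" using Ff by simp
      show ?thesis unfolding a1 a2 by (simp add: field_simps)
    qed
    finally show "F$i$j = G$i$j" by simp
  qed
  ultimately show ?thesis by simp
qed


lemma iH_in: "cmat_scale \<i> (cost_ham C) \<in> Lset C"
  unfolding Lset_def antiherm_iff
  by (rule CollectI, rule conjI, simp add: cmat_scale_def cost_ham_def,
      rule exI[of _ "\<lambda>_ _. 0"], rule exI[of _ 1], simp add: cmat_scale_def cost_ham_def)

lemma iJ_in: "cmat_scale \<i> mixer_ham \<in> Lset C"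
  unfolding Lset_def antiherm_iff
  by (rule CollectI, rule conjI, simp add: cmat_scale_def mixer_ham_def,
      rule exI[of _ "\<lambda>_ _. \<i>"], rule exI[of _ 0], simp add: cmat_scale_def mixer_ham_def)

lemma L_subspace: "subspace (Lset C)"
  unfolding subspace_def
proof (intro conjI ballI allI)
  show "0 \<in> Lset C" unfolding Lset_def antiherm_iff
    by (rule CollectI, rule conjI, simp, rule exI[of _ "\<lambda>_ _. 0"], rule exI[of _ 0], simp)
next
  fix A B assume "A \<in> Lset C" "B \<in> Lset C"
  then obtain f a g b where ah: "antiherm A" "antiherm B"
    and f: "\<forall>i j. A$i$j = f (C i) (C j) + (if i = j then \<i> * of_real a * of_real (C i) else 0)"
    and g: "\<forall>i j. B$i$j = g (C i) (C j) + (if i = j then \<i> * of_real b * of_real (C i) else 0)"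
    unfolding Lset_def by blast
  show "A + B \<in> Lset C" unfolding Lset_def
    apply (rule CollectI, rule conjI)
    using ah apply (simp add: antiherm_iff)
    apply (rule exI[of _ "\<lambda>x y. f x y + g x y"], rule exI[of _ "a + b"])
    using f g by (simp add: algebra_simps)
next
  fix c :: real and A assume "A \<in> Lset C"
  then obtain f a where ah: "antiherm A"
    and f: "\<forall>i j. A$i$j = f (C i) (C j) + (if i = j then \<i> * of_real a * of_real (C i) else 0)"
    unfolding Lset_def by blast
  show "c *\<^sub>R A \<in> Lset C" unfolding Lset_def
    apply (rule CollectI, rule conjI)
    using ah apply (simp add: antiherm_iff csc)
    apply (rule exI[of _ "\<lambda>x y. of_real c * f x y"], rule exI[of _ "c * a"])
    using f by (simp add: csc algebra_simps)
qed

lemma L_lie: "lie_closed (Lset C)"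
  unfolding lie_closed_def
proof (intro ballI)
  fix A B assume "A \<in> Lset C" "B \<in> Lset C"
  then obtain f a g b where ah: "antiherm A" "antiherm B"
    and f: "\<forall>i j. A$i$j = f (C i) (C j) + (if i = j then \<i> * of_real a * of_real (C i) else 0)"
    and g: "\<forall>i j. B$i$j = g (C i) (C j) + (if i = j then \<i> * of_real b * of_real (C i) else 0)"
    unfolding Lset_def by blast
  obtain h where h: "\<forall>i j. (commutator A B)$i$j = h (C i) (C j)"
    using comm_form[OF f g] by blast
  show "commutator A B \<in> Lset C" unfolding Lset_def
    apply (rule CollectI, rule conjI)
    using antiherm_comm[OF ah] apply simp
    apply (rule exI[of _ h], rule exI[of _ 0])
    using h by simp
qed

lemma L_span: "Lset C \<subseteq> span (insert (cmat_scale \<i> (cost_ham C)) (gg C ` (range C \<times> range C)))"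
proof
  fix A assume "A \<in> Lset C"
  then obtain f a where ah: "antiherm A"
    and f: "\<forall>i j. A$i$j = f (C i) (C j) + (if i = j then \<i> * of_real a * of_real (C i) else 0)"
    unfolding Lset_def by blast
  define F where "F = A - a *\<^sub>R cmat_scale \<i> (cost_ham C)"
  have "antiherm F" using ah unfolding F_def antiherm_iff
    by (simp add: cmat_scale_def cost_ham_def csc)
  moreover have "\<forall>i j. F$i$j = f (C i) (C j)"
    using f unfolding F_def by (simp add: cmat_scale_def cost_ham_def csc)
  ultimately have "F \<in> span (gg C ` (range C \<times> range C))" by (rule F_span)
  then have "F \<in> span (insert (cmat_scale \<i> (cost_ham C)) (gg C ` (range C \<times> range C)))"
    by (meson span_mono subset_insertI subsetD)
  moreover have "a *\<^sub>R cmat_scale \<i> (cost_ham C) \<in> span (insert (cmat_scale \<i> (cost_ham C)) (gg C ` (range C \<times> range C)))"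
    by (simp add: span_base span_scale)
  ultimately have "F + a *\<^sub>R cmat_scale \<i> (cost_ham C) \<in> span (insert (cmat_scale \<i> (cost_ham C)) (gg C ` (range C \<times> range C)))"
    by (rule span_add)
  then show "A \<in> span (insert (cmat_scale \<i> (cost_ham C)) (gg C ` (range C \<times> range C)))"
    unfolding F_def by simp
qed

theorem theorem1:
  fixes C :: "'a::finite \<Rightarrow> real"
  shows "dim (qwoa_dla C) \<le> (card (range C))\<^sup>2 + 1"
proof -
  let ?S = "insert (cmat_scale \<i> (cost_ham C)) (gg C ` (range C \<times> range C))"
  have sub: "qwoa_dla C \<subseteq> Lset C"
    unfolding qwoa_dla_def gen_real_lie_alg_def
    by (rule Inter_lower) (simp add: iH_in iJ_in L_subspace L_lie)
  have fin: "finite ?S" by simp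
  have "dim (qwoa_dla C) \<le> dim (Lset C)" by (rule dim_subset[OF sub])
  also have "\<dots> \<le> card ?S" by (rule dim_le_card[OF L_span fin])
  also have "\<dots> \<le> card (gg C ` (range C \<times> range C)) + 1"
    by (simp add: card_insert_if)
  also have "\<dots> \<le> card (range C \<times> range C) + 1"
    using card_image_le[of "range C \<times> range C" "gg C"] by simp
  also have "\<dots> = (card (range C))\<^sup>2 + 1"
    by (simp add: card_cartesian_product power2_eq_square)
  finally show ?thesis .
qed

end
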